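(* Let $A$ be a metric space, $\sigma:\mathbb{R}^N\times A\to\mathbb{R}^{N\times m}$, $b:\mathbb{R}^N\times A\to\mathbb{R}^N$, $c:\mathbb{R}^N\times A\to\mathbb{R}$ continuous, $a=\sigma\sigma^T$, and suppose: (C1) for every $R>0$ there is $K_R$ with $\sup_{|x|\le R,\alpha\in A}(|\sigma|+|b|+|c|)\le K_R$ and $|\sigma(x,\alpha)-\sigma(y,\alpha)|+|b(x,\alpha)-b(y,\alpha)|\le K_R|x-y|$ for all $|x|,|y|\le R$, $\alpha\in A$; (C2) $c\ge0$ and $c$ is continuous in $x$ uniformly in $|x|\le R$, $\alpha\in A$, for each $R$; (C3) $\xi^Ta(x,\alpha)\xi\ge|\xi|^2/K_R$ for all $\xi\in\mathbb{R}^N$, $|x|\le R$, $\alpha\in A$; (C4) $\sup_{\alpha\in A}(\mathrm{tr}\,a(x,\alpha)+b(x,\alpha)\cdot x-c(x,\alpha)|x|^2/2)\le0$ for $|x|\ge R_o$, for some $R_o\ge0$. Let $L^\alpha u=\mathrm{tr}(a(x,\alpha)D^2u)+b(x,\alpha)\cdot Du$, $G[u]=\inf_\alpha\{-L^\alpha u+c(x,\alpha)u\}$, $\tilde G[u]=\sup_\alpha\{-L^\alpha u+c(x,\alpha)u\}$. (a) If $u\in USC(\mathbb{R}^N)$ is a viscosity subsolution of $G[u]\le0$ in $\mathbb{R}^N$ with $\limsup_{|x|\to\infty}u(x)/|x|^2\le0$, and either $u\ge0$ or $c\equiv0$, then $u$ is constant. (b) If $v\in LSC(\mathbb{R}^N)$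 is a viscosity supersolution of $\tilde G[v]\ge0$ in $\mathbb{R}^N$ with $\liminf_{|x|\to\infty}v(x)/|x|^2\ge0$, and either $v\le0$ or $c\equiv0$, then $v$ is constant.
   Context: Sub- and supersolutions are in the viscosity sense. *)

theory Defs
  imports "HOL-Analysis.Analysis"
begin

definition usc :: "('a::topological_space \<Rightarrow> real) \<Rightarrow> bool" where
  "usc u \<longleftrightarrow> (\<forall>t. open {x. u x < t})"

definition lsc :: "('a::topological_space \<Rightarrow> real) \<Rightarrow> bool" where
  "lsc u \<longleftrightarrow> (\<forall>t. open {x. u x > t})"

definition C2_with :: "(real^'n \<Rightarrow> real) \<Rightarrow> (real^'n \<Rightarrow> real^'n) \<Rightarrow> (real^'n \<Rightarrow> real^'n^'n) \<Rightarrow> bool" where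
  "C2_with phi Dphi D2phi \<longleftrightarrow>
     (\<forall>x. (phi has_derivative (\<lambda>h. Dphi x \<bullet> h)) (at x)) \<and>
     (\<forall>x. (Dphi has_derivative (\<lambda>h. D2phi x *v h)) (at x)) \<and>
     continuous_on UNIV D2phi"

definition diffmat :: "(real^'n \<Rightarrow> 'a \<Rightarrow> real^'m^'n) \<Rightarrow> real^'n \<Rightarrow> 'a \<Rightarrow> real^'n^'n" where
  "diffmat \<sigma> x \<alpha> = \<sigma> x \<alpha> ** transpose (\<sigma> x \<alpha>)"

text \<open>Linear operator L^alpha applied to (p = Du, X = D^2 u) at x.\<close>
definition Lop :: "(real^'n \<Rightarrow> 'a \<Rightarrow> real^'m^'n) \<Rightarrow> (real^'n \<Rightarrow> 'a \<Rightarrow> real^'n)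
    \<Rightarrow> real^'n \<Rightarrow> 'a \<Rightarrow> real^'n \<Rightarrow> real^'n^'n \<Rightarrow> real" where
  "Lop \<sigma> b x \<alpha> p X = trace (diffmat \<sigma> x \<alpha> ** X) + b x \<alpha> \<bullet> p"

definition Gop :: "(real^'n \<Rightarrow> 'a \<Rightarrow> real^'m^'n) \<Rightarrow> (real^'n \<Rightarrow> 'a \<Rightarrow> real^'n) \<Rightarrow> (real^'n \<Rightarrow> 'a \<Rightarrow> real)
    \<Rightarrow> real^'n \<Rightarrow> real \<Rightarrow> real^'n \<Rightarrow> real^'n^'n \<Rightarrow> real" where
  "Gop \<sigma> b c x r p X = (INF \<alpha>. - Lop \<sigma> b x \<alpha> p X + c x \<alpha> * r)"

definition Gtop :: "(real^'n \<Rightarrow> 'a \<Rightarrow> real^'m^'n) \<Rightarrow> (real^'n \<Rightarrow> 'a \<Rightarrow> real^'n) \<Rightarrow> (real^'n \<Rightarrow> 'a \<Rightarrow> real)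
    \<Rightarrow> real^'n \<Rightarrow> real \<Rightarrow> real^'n \<Rightarrow> real^'n^'n \<Rightarrow> real" where
  "Gtop \<sigma> b c x r p X = (SUP \<alpha>. - Lop \<sigma> b x \<alpha> p X + c x \<alpha> * r)"

definition visc_sub :: "(real^'n \<Rightarrow> real \<Rightarrow> real^'n \<Rightarrow> real^'n^'n \<Rightarrow> real) \<Rightarrow> (real^'n \<Rightarrow> real) \<Rightarrow> bool" where
  "visc_sub F u \<longleftrightarrow> usc u \<and>
     (\<forall>phi Dphi D2phi x0. C2_with phi Dphi D2phi \<and>
        (\<exists>r>0. \<forall>y\<in>ball x0 r. u y - phi y \<le> u x0 - phi x0)
        \<longrightarrow> F x0 (u x0) (Dphi x0) (D2phi x0) \<le> 0)"

definition visc_super :: "(real^'n \<Rightarrow> real \<Rightarrow> real^'n \<Rightarrow> real^'n^'n \<Rightarrow> real) \<Rightarrow> (real^'n \<Rightarrow> real) \<Rightarrow> bool" where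
  "visc_super F v \<longleftrightarrow> lsc v \<and>
     (\<forall>phi Dphi D2phi x0. C2_with phi Dphi D2phi \<and>
        (\<exists>r>0. \<forall>y\<in>ball x0 r. v y - phi y \<ge> v x0 - phi x0)
        \<longrightarrow> F x0 (v x0) (Dphi x0) (D2phi x0) \<ge> 0)"

end

theory Submission
  imports Defs
begin


definition outer :: "real^'n \<Rightarrow> real^'n^'n" where
  "outer v = (\<chi> i j. v$i * v$j)"

lemma outer_mult: "outer v *v h = (v \<bullet> h) *\<^sub>R v"
  by (simp add: outer_def matrix_vector_mult_def inner_vec_def vec_eq_iff sum_distrib_left sum_distrib_right algebra_simps)

lemma trace_lin:
  fixes a :: "real^'n^'n"
  shows "trace (a ** (A *\<^sub>R mat 1 + B *\<^sub>R outer v)) = A * trace a + B * (v \<bullet> (a *v v))"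
proof -
  have "trace (a ** (A *\<^sub>R mat 1 + B *\<^sub>R outer v)) = (\<Sum>i\<in>UNIV. \<Sum>k\<in>UNIV. a$i$k * (A * (if k = i then 1 else 0) + B * (v$k * v$i)))"
    by (simp add: trace_def matrix_matrix_mult_def outer_def mat_def)
  also have "\<dots> = (\<Sum>i\<in>UNIV. A * a$i$i) + (\<Sum>i\<in>UNIV. \<Sum>k\<in>UNIV. B * (a$i$k * v$k * v$i))"
  proof -
    have "\<And>i. (\<Sum>k\<in>UNIV. a$i$k * (A * (if k = i then 1 else 0) + B * (v$k * v$i)))
       = (\<Sum>k\<in>UNIV. (if k = i then A * a$i$i else 0)) + (\<Sum>k\<in>UNIV. B * (a$i$k * v$k * v$i))"
      by (subst sum.distrib[symmetric], rule sum.cong) (auto simp: algebra_simps)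
    then show ?thesis by (simp add: sum.distrib)
  qed
  also have "\<dots> = A * trace a + B * (v \<bullet> (a *v v))"
    by (simp add: trace_def inner_vec_def matrix_vector_mult_def sum_distrib_left sum_distrib_right algebra_simps)
  finally show ?thesis .
qed

lemma trace_diffmat: "trace (diffmat \<sigma> x \<alpha>) = norm (\<sigma> x \<alpha>) ^ 2"
  by (simp add: diffmat_def trace_def matrix_matrix_mult_def transpose_def power2_norm_eq_inner inner_vec_def)

lemma Lop_neg: "Lop \<sigma> b x \<alpha> (- p) (- X) = - Lop \<sigma> b x \<alpha> p X"
  by (simp add: Lop_def trace_def matrix_matrix_mult_def sum_negf)




lemma q_deriv: "((\<lambda>x::real^'n. norm (x - y) ^ 2) has_derivative (\<lambda>h. 2 * ((x - y) \<bullet> h))) (at x)"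
proof -
  have "((\<lambda>x::real^'n. (x - y) \<bullet> (x - y)) has_derivative (\<lambda>h. (x - y) \<bullet> h + h \<bullet> (x - y))) (at x)"
    by (auto intro!: derivative_eq_intros)
  then show ?thesis
    by (simp add: power2_norm_eq_inner[symmetric] inner_commute) 
qed

lemma radial_C2:
  fixes y :: "real^'n"
  assumes g: "\<And>t. t \<ge> 0 \<Longrightarrow> (g has_real_derivative g1 t) (at t)"
    and g1: "\<And>t. t \<ge> 0 \<Longrightarrow> (g1 has_real_derivative g2 t) (at t)"
    and g2: "continuous_on {0..} g2"
  shows "C2_with (\<lambda>x. g (norm (x-y)^2)) (\<lambda>x. (2 * g1 (norm(x-y)^2)) *\<^sub>R (x - y))
           (\<lambda>x. (2*g1 (norm(x-y)^2)) *\<^sub>R mat 1 + (4 * g2 (norm(x-y)^2)) *\<^sub>R outer (x-y))"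
  unfolding C2_with_def
proof (intro conjI allI)
  fix x :: "real^'n"
  let ?t = "norm (x - y) ^ 2"
  have "((\<lambda>x. g (norm (x-y)^2)) has_derivative (\<lambda>h. g1 ?t * (2 * ((x - y) \<bullet> h)))) (at x)"
    using has_derivative_compose[OF q_deriv[of y x] g[of ?t, unfolded has_field_derivative_def]]
    by simp
  then show "((\<lambda>x. g (norm (x-y)^2)) has_derivative (\<lambda>h. (2 * g1 (norm(x-y)^2)) *\<^sub>R (x - y) \<bullet> h)) (at x)"
    by (rule has_derivative_eq_rhs) (auto simp: fun_eq_iff algebra_simps)
  have k: "((\<lambda>x. 2 * g1 (norm (x-y)^2)) has_derivative (\<lambda>h. 2 * (g2 ?t * (2 * ((x - y) \<bullet> h))))) (at x)"
    using has_derivative_compose[OF q_deriv[of y x] g1[of ?t, unfolded has_field_derivative_def]]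
    by (auto intro!: derivative_eq_intros)
  have "((\<lambda>x. (2 * g1 (norm(x-y)^2)) *\<^sub>R (x - y)) has_derivative
     (\<lambda>h. (2 * g1 ?t) *\<^sub>R h + (2 * (g2 ?t * (2 * ((x - y) \<bullet> h)))) *\<^sub>R (x - y))) (at x)"
    by (rule has_derivative_eq_rhs, rule has_derivative_scaleR[OF k], auto intro!: derivative_eq_intros)
  then show "((\<lambda>x. (2 * g1 (norm(x-y)^2)) *\<^sub>R (x - y)) has_derivative
     (\<lambda>h. ((2*g1 (norm(x-y)^2)) *\<^sub>R mat 1 + (4 * g2 (norm(x-y)^2)) *\<^sub>R outer (x-y)) *v h)) (at x)"
    by (rule has_derivative_eq_rhs)
       (auto simp: fun_eq_iff matrix_vector_mult_add_rdistrib scaleR_matrix_vector_assoc[symmetric] outer_mult)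
next
  have c1: "continuous_on {0..} g1"
    by (intro continuous_at_imp_continuous_on ballI) (auto intro: DERIV_isCont g1)
  have cq: "continuous_on UNIV (\<lambda>x::real^'n. norm (x-y)^2)"
    by (intro continuous_intros)
  have "continuous_on UNIV (\<lambda>x::real^'n. g1 (norm (x-y)^2))"
    by (rule continuous_on_compose2[OF c1 cq]) auto
  moreover have "continuous_on UNIV (\<lambda>x::real^'n. g2 (norm (x-y)^2))"
    by (rule continuous_on_compose2[OF g2 cq]) auto
  moreover have "continuous_on UNIV (\<lambda>x::real^'n. outer (x-y))"
    unfolding outer_def by (intro continuous_intros)
  ultimately show "continuous_on UNIV (\<lambda>x. (2*g1 (norm(x-y)^2)) *\<^sub>R mat 1 + (4 * g2 (norm(x-y)^2)) *\<^sub>R outer (x-y))"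
    by (intro continuous_intros)
qed




lemma usc_eventually: "usc u \<Longrightarrow> u x < t \<Longrightarrow> eventually (\<lambda>y. u y < t) (nhds x)"
  unfolding usc_def eventually_nhds by (rule exI[of _ "{x. u x < t}"]) auto

lemma usc_minus_cont:
  fixes u \<phi> :: "real^'n \<Rightarrow> real"
  assumes u: "usc u" and p: "continuous_on UNIV \<phi>"
  shows "usc (\<lambda>x. u x - \<phi> x)"
  unfolding usc_def
proof (intro allI)
  fix t
  show "open {x. u x - \<phi> x < t}"
  proof (subst open_subopen, intro ballI)
    fix x assume "x \<in> {x. u x - \<phi> x < t}"
    then have lt: "u x - \<phi> x < t" by simp
    define e where "e = (t - (u x - \<phi> x)) / 2"
    have e: "e > 0" using lt by (simp add: e_def)
    have "eventually (\<lambda>y. u y < u x + e) (nhds x)"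
      using usc_eventually[OF u, of x "u x + e"] e by simp
    moreover have "eventually (\<lambda>y. dist (\<phi> y) (\<phi> x) < e) (nhds x)"
    proof -
      have "isCont \<phi> x" using p by (simp add: continuous_on_eq_continuous_at)
      then have "eventually (\<lambda>y. dist (\<phi> y) (\<phi> x) < e) (at x)"
        using e unfolding isCont_def tendsto_iff by blast
      then show ?thesis unfolding eventually_at_filter
        by eventually_elim (use e in auto)
    qed
    ultimately have "eventually (\<lambda>y. u y - \<phi> y < t) (nhds x)"
    proof eventually_elim
      case (elim y)
      have "\<bar>\<phi> y - \<phi> x\<bar> < e" using elim(2) by (simp add: dist_real_def)
      moreover have "2*e = t - (u x - \<phi> x)" by (simp add: e_def)
      ultimately show ?case using elim(1) by (simp add: abs_less_iff)
    qed
    then show "\<exists>T. open T \<and> x \<in> T \<and> T \<subseteq> {x. u x - \<phi> x < t}"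
      unfolding eventually_nhds by auto
  qed
qed

lemma usc_attains_max:
  assumes f: "usc f" and S: "compact S" "S \<noteq> {}"
  shows "\<exists>x\<in>S. \<forall>y\<in>S. f y \<le> f x"
proof (rule ccontr)
  assume "\<not> ?thesis"
  then have H: "\<forall>x\<in>S. \<exists>z\<in>S. f x < f z" by (auto simp: not_le)
  have "S \<subseteq> (\<Union>z\<in>S. {x. f x < f z})" using H by auto
  then obtain C where C: "C \<subseteq> S" "finite C" "S \<subseteq> (\<Union>z\<in>C. {x. f x < f z})"
    using compactE_image[OF S(1), of S "\<lambda>z. {x. f x < f z}"] f unfolding usc_def by metis
  have "C \<noteq> {}" using C S(2) by auto
  then obtain z where z: "z \<in> C" "\<forall>w\<in>C. f w \<le> f z"
  proof -
    have "Max (f ` C) \<in> f ` C" using C(2) \<open>C \<noteq> {}\<close> by (intro Max_in) auto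
    then obtain z where "z \<in> C" "f z = Max (f ` C)" by auto
    moreover have "\<forall>w\<in>C. f w \<le> Max (f ` C)" using C(2) by auto
    ultimately show ?thesis using that by auto
  qed
  then have "z \<in> S" using C by auto
  then obtain w where "w \<in> C" "f z < f w" using C(3) by auto
  with z show False by force
qed




lemma Lop_radial:
  "Lop \<sigma> b x \<alpha> (A *\<^sub>R v) ((2*g1) *\<^sub>R mat 1 + B *\<^sub>R outer v)
   = (2*g1) * norm (\<sigma> x \<alpha>) ^ 2 + A * (b x \<alpha> \<bullet> v) + B * (v \<bullet> (diffmat \<sigma> x \<alpha> *v v))"
  by (simp add: Lop_def trace_lin trace_diffmat)

lemma touch_contra:
  assumes "visc_sub (Gop \<sigma> b c) u" "C2_with \<phi> D\<phi> D2\<phi>" "r > 0"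
    "\<forall>y\<in>ball x0 r. u y - \<phi> y \<le> u x0 - \<phi> x0" "\<eta> > 0"
    "\<And>\<alpha>. \<eta> \<le> - Lop \<sigma> b x0 \<alpha> (D\<phi> x0) (D2\<phi> x0) + c x0 \<alpha> * u x0"
  shows False
proof -
  have "Gop \<sigma> b c x0 (u x0) (D\<phi> x0) (D2\<phi> x0) \<le> 0"
    using assms(1-4) unfolding visc_sub_def by blast
  moreover have "\<eta> \<le> Gop \<sigma> b c x0 (u x0) (D\<phi> x0) (D2\<phi> x0)"
    unfolding Gop_def by (rule cINF_greatest) (use assms(6) in auto)
  ultimately show False using assms(5) by linarith
qed

lemma mat_neg_mult: "(- A) *v h = - (A *v (h::real^'n))"
  by (simp add: matrix_vector_mult_def vec_eq_iff sum_negf)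

lemma C2_neg:
  assumes "C2_with \<phi> D\<phi> D2\<phi>"
  shows "C2_with (\<lambda>x. - \<phi> x) (\<lambda>x. - D\<phi> x) (\<lambda>x. - D2\<phi> x)"
  unfolding C2_with_def
proof (intro conjI allI)
  fix x
  have "((\<lambda>x. - \<phi> x) has_derivative (\<lambda>h. - (D\<phi> x \<bullet> h))) (at x)"
    using assms unfolding C2_with_def by (blast intro: has_derivative_minus)
  then show "((\<lambda>x. - \<phi> x) has_derivative (\<lambda>h. - D\<phi> x \<bullet> h)) (at x)" by simp
  have "((\<lambda>x. - D\<phi> x) has_derivative (\<lambda>h. - (D2\<phi> x *v h))) (at x)"
    using assms unfolding C2_with_def by (blast intro: has_derivative_minus)
  then show "((\<lambda>x. - D\<phi> x) has_derivative (\<lambda>h. - D2\<phi> x *v h)) (at x)" by (simp add: mat_neg_mult)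
next
  show "continuous_on UNIV (\<lambda>x. - D2\<phi> x)"
    using assms unfolding C2_with_def by (blast intro: continuous_on_minus)
qed

lemma Gop_Gtop:
  "Gop \<sigma> b c x r p X = - Gtop \<sigma> b c x (- r) (- p) (- X)"
proof -
  have "Gtop \<sigma> b c x (- r) (- p) (- X) = Sup (range (\<lambda>\<alpha>. - (- Lop \<sigma> b x \<alpha> p X + c x \<alpha> * r)))"
    by (simp add: Gtop_def Lop_neg)
  also have "range (\<lambda>\<alpha>. - (- Lop \<sigma> b x \<alpha> p X + c x \<alpha> * r)) = uminus ` range (\<lambda>\<alpha>. - Lop \<sigma> b x \<alpha> p X + c x \<alpha> * r)"
    by (simp only: image_image)
  finally show ?thesis by (simp add: Gop_def Inf_real_def)
qed




lemma ln_lower: "(t::real) \<ge> 0 \<Longrightarrow> t / (2 + t) \<le> ln (1 + t/2)"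
proof -
  assume t: "t \<ge> 0"
  have "ln (2/(2+t)) \<le> 2/(2+t) - 1" by (rule ln_le_minus_one) (use t in auto)
  moreover have "ln (2/(2+t)) = - ln (1 + t/2)"
  proof -
    have "2/(2+t) = inverse (1 + t/2)" using t by (simp add: field_simps)
    then show ?thesis by (simp add: ln_inverse)
  qed
  moreover have "2/(2+t) - 1 = - (t/(2+t))" using t by (simp add: field_simps)
  ultimately show ?thesis by linarith
qed

lemma bound_K:
  fixes \<sigma> :: "real^'n \<Rightarrow> 'a \<Rightarrow> real^'m^'n" and b :: "real^'n \<Rightarrow> 'a \<Rightarrow> real^'n" and c :: "real^'n \<Rightarrow> 'a \<Rightarrow> real"
  assumes bnd: "\<forall>R>0. \<exists>K. (\<forall>x \<alpha>. norm x \<le> R \<longrightarrow> norm (\<sigma> x \<alpha>) + norm (b x \<alpha>) + \<bar>c x \<alpha>\<bar> \<le> K)"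
  obtains K where "\<And>x' \<alpha>. norm x' \<le> R \<Longrightarrow> norm (\<sigma> x' \<alpha>) \<le> K \<and> norm (b x' \<alpha>) \<le> K \<and> \<bar>c x' \<alpha>\<bar> \<le> K"
proof -
  obtain K where K: "\<forall>x \<alpha>. norm x \<le> max R 1 \<longrightarrow> norm (\<sigma> x \<alpha>) + norm (b x \<alpha>) + \<bar>c x \<alpha>\<bar> \<le> K"
  proof -
    have "max R 1 > (0::real)" by simp
    from bnd[rule_format, OF this] show ?thesis using that by blast
  qed
  show ?thesis
  proof (rule that)
    fix x' :: "real^'n" and \<alpha> assume "norm x' \<le> R"
    then have "norm (\<sigma> x' \<alpha>) + norm (b x' \<alpha>) + \<bar>c x' \<alpha>\<bar> \<le> K" using K by auto
    then show "norm (\<sigma> x' \<alpha>) \<le> K \<and> norm (b x' \<alpha>) \<le> K \<and> \<bar>c x' \<alpha>\<bar> \<le> K"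
      using norm_ge_zero[of "\<sigma> x' \<alpha>"] norm_ge_zero[of "b x' \<alpha>"] abs_ge_zero[of "c x' \<alpha>"] by linarith
  qed
qed

lemma C4_alpha:
  fixes \<sigma> :: "real^'n \<Rightarrow> 'a \<Rightarrow> real^'m^'n"
  assumes bnd: "\<forall>R>0. \<exists>K. (\<forall>x \<alpha>. norm x \<le> R \<longrightarrow> norm (\<sigma> x \<alpha>) + norm (b x \<alpha>) + \<bar>c x \<alpha>\<bar> \<le> K)"
    and cpos: "\<forall>x \<alpha>. c x \<alpha> \<ge> 0"
    and C4: "\<forall>x. norm x \<ge> Ro \<longrightarrow>
               (SUP \<alpha>. trace (diffmat \<sigma> x \<alpha>) + b x \<alpha> \<bullet> x - c x \<alpha> * norm x ^ 2 / 2) \<le> 0"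
    and x: "norm x \<ge> Ro"
  shows "norm (\<sigma> x \<alpha>)^2 + b x \<alpha> \<bullet> x - c x \<alpha> * norm x^2/2 \<le> 0"
proof -
  obtain K where K: "\<And>x' \<alpha>. norm x' \<le> norm x \<Longrightarrow> norm (\<sigma> x' \<alpha>) \<le> K \<and> norm (b x' \<alpha>) \<le> K \<and> \<bar>c x' \<alpha>\<bar> \<le> K"
    using bound_K[OF bnd] by blast
  let ?f = "\<lambda>\<alpha>. trace (diffmat \<sigma> x \<alpha>) + b x \<alpha> \<bullet> x - c x \<alpha> * norm x ^ 2 / 2"
  have "bdd_above (range ?f)"
  proof (rule bdd_aboveI2)
    fix \<alpha>
    have k: "norm (\<sigma> x \<alpha>) \<le> K" "norm (b x \<alpha>) \<le> K" using K[of x \<alpha>] by auto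
    have 1: "norm (\<sigma> x \<alpha>)^2 \<le> K^2" using k(1) by (simp add: power_mono)
    have "b x \<alpha> \<bullet> x \<le> norm (b x \<alpha>) * norm x" by (rule norm_cauchy_schwarz)
    also have "\<dots> \<le> K * norm x" using k(2) by (simp add: mult_right_mono)
    finally have 2: "b x \<alpha> \<bullet> x \<le> K * norm x" .
    have 3: "c x \<alpha> * norm x^2/2 \<ge> 0" using cpos by simp
    show "?f \<alpha> \<le> K^2 + K * norm x" using 1 2 3 by (simp add: trace_diffmat)
  qed
  then have "?f \<alpha> \<le> (SUP \<alpha>. ?f \<alpha>)" by (rule cSUP_upper[rotated]) simp
  also have "\<dots> \<le> 0" using C4 x by blast
  finally show ?thesis by (simp add: trace_diffmat)
qed




lemma g_derivs:
  assumes "(t::real) \<ge> 0"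
  shows "((\<lambda>t. \<epsilon> * (t/2 + ln (1 + t/2))) has_real_derivative (\<epsilon>/2 + \<epsilon>/(2+t))) (at t)"
    and "((\<lambda>t. \<epsilon>/2 + \<epsilon>/(2+t)) has_real_derivative (- (\<epsilon>/(2+t)^2))) (at t)"
proof -
  have nz: "2 + t \<noteq> 0" "1 + t/2 \<noteq> 0" using assms by auto
  show "((\<lambda>t. \<epsilon> * (t/2 + ln (1 + t/2))) has_real_derivative (\<epsilon>/2 + \<epsilon>/(2+t))) (at t)"
    using assms by (auto intro!: derivative_eq_intros simp: field_simps)
  have "((\<lambda>t. \<epsilon>/2 + \<epsilon>/(2+t)) has_real_derivative (0 + (- (\<epsilon> * (0 + 1)) / ((2+t)*(2+t))))) (at t)"
    using nz by (intro derivative_eq_intros refl) auto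
  then show "((\<lambda>t. \<epsilon>/2 + \<epsilon>/(2+t)) has_real_derivative (- (\<epsilon>/(2+t)^2))) (at t)"
    by (simp add: power2_eq_square)
qed

lemma step1:
  fixes \<sigma> :: "real^'n \<Rightarrow> 'a \<Rightarrow> real^'m^'n"
  assumes bnd: "\<forall>R>0. \<exists>K. (\<forall>x \<alpha>. norm x \<le> R \<longrightarrow> norm (\<sigma> x \<alpha>) + norm (b x \<alpha>) + \<bar>c x \<alpha>\<bar> \<le> K)"
    and cpos: "\<forall>x \<alpha>. c x \<alpha> \<ge> 0"
    and C3: "\<forall>R>0. \<exists>K>0. \<forall>\<xi> x \<alpha>. norm x \<le> R \<longrightarrow>
               \<xi> \<bullet> (diffmat \<sigma> x \<alpha> *v \<xi>) \<ge> norm \<xi> ^ 2 / K"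
    and C4: "\<exists>Ro\<ge>0. \<forall>x. norm x \<ge> Ro \<longrightarrow>
               (SUP \<alpha>. trace (diffmat \<sigma> x \<alpha>) + b x \<alpha> \<bullet> x - c x \<alpha> * norm x ^ 2 / 2) \<le> 0"
    and sub: "visc_sub (Gop \<sigma> b c) u"
    and lim: "Limsup at_infinity (\<lambda>x. ereal (u x / norm x ^ 2)) \<le> 0"
    and sgn: "(\<forall>x. u x \<ge> 0) \<or> (\<forall>x \<alpha>. c x \<alpha> = 0)"
  shows "\<exists>z. \<forall>x. u x \<le> u z"
proof -
  obtain Ro where Ro: "Ro \<ge> 0" "\<forall>x. norm x \<ge> Ro \<longrightarrow>
               (SUP \<alpha>. trace (diffmat \<sigma> x \<alpha>) + b x \<alpha> \<bullet> x - c x \<alpha> * norm x ^ 2 / 2) \<le> 0"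
    using C4 by blast
  define R1 where "R1 = Ro + 1"
  have R1: "R1 > 0" using Ro by (simp add: R1_def)
  have usc: "usc u" using sub unfolding visc_sub_def by blast
  obtain z0 where z0: "z0 \<in> cball 0 R1" "\<forall>y\<in>cball 0 R1. u y \<le> u z0"
    using usc_attains_max[OF usc compact_cball, of 0 R1] R1 by fastforce
  have "\<forall>x. u x \<le> u z0"
  proof (rule ccontr)
    assume "\<not> (\<forall>x. u x \<le> u z0)"
    then obtain x where x: "u x > u z0" by (auto simp: not_le)
    then have xR: "norm x > R1" using z0 by (force simp: not_le)
    define g where "g = (\<lambda>\<epsilon> t. \<epsilon> * (t/2 + ln (1 + t/2::real)))"
    define h where "h = (\<lambda>y::real^'n. norm y^2/2 + ln (1 + norm y^2/2))"
    have h0: "\<And>y. h y \<ge> norm y^2/2" unfolding h_def by simp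
    have h0': "\<And>y. h y \<ge> 0" using h0 order_trans[OF _ h0] by (metis divide_nonneg_pos zero_le_power2 zero_less_numeral)
    define \<epsilon> where "\<epsilon> = (u x - u z0) / (h x + 1)"
    have \<epsilon>: "\<epsilon> > 0" using x h0'[of x] by (simp add: \<epsilon>_def)
    have \<epsilon>x: "\<epsilon> * h x < u x - u z0"
    proof -
      have "\<epsilon> * h x = (u x - u z0) * (h x / (h x + 1))" by (simp add: \<epsilon>_def)
      also have "\<dots> < (u x - u z0) * 1"
        using x h0'[of x] by (intro mult_strict_left_mono) auto
      finally show ?thesis by simp
    qed
    have "Limsup at_infinity (\<lambda>x. ereal (u x / norm x ^ 2)) < ereal (\<epsilon>/4)"
      using lim \<epsilon> by (meson ereal_less(2) le_less_trans zero_less_divide_iff zero_less_numeral)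
    then have "eventually (\<lambda>y. ereal (u y / norm y^2) < ereal (\<epsilon>/4)) at_infinity"
      by (rule Limsup_lessD)
    then obtain B where B: "\<And>y. norm y \<ge> B \<Longrightarrow> u y / norm y^2 < \<epsilon>/4"
      unfolding eventually_at_infinity by auto
    define R2 where "R2 = max (max B (norm x + 1)) (max 1 (4*\<bar>u z0\<bar>/\<epsilon> + 1))"
    define w where "w = (\<lambda>y. u y - \<epsilon> * h y)"
    have far: "w y < u z0" if y: "norm y \<ge> R2" for y
    proof -
      have y1: "norm y \<ge> 1" "norm y \<ge> B" "norm y \<ge> 4*\<bar>u z0\<bar>/\<epsilon> + 1" using y by (auto simp: R2_def)
      have np: "norm y ^2 > 0" using y1 by (intro zero_less_power) linarith
      have "u y < \<epsilon>/4 * norm y^2" using B[OF y1(2)] np by (simp add: divide_less_eq)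
      moreover have "\<epsilon> * h y \<ge> \<epsilon> * (norm y^2/2)" using h0[of y] \<epsilon> by (simp add: mult_left_mono)
      moreover have "norm y^2 \<ge> norm y" using mult_left_mono[of 1 "norm y" "norm y"] y1(1) by (simp add: power2_eq_square)
      moreover have "\<epsilon> * norm y \<ge> 4*\<bar>u z0\<bar>"
      proof -
        have "\<epsilon> * norm y \<ge> \<epsilon> * (4*\<bar>u z0\<bar>/\<epsilon>)" using y1(3) \<epsilon> by (intro mult_left_mono) auto
        then show ?thesis using \<epsilon> by simp
      qed
      moreover have "\<epsilon> * norm y^2 \<ge> \<epsilon> * norm y" using calculation(3) \<epsilon> by (simp add: mult_left_mono)
      ultimately show ?thesis unfolding w_def by linarith
    qed
    have pos: "\<forall>y::real^'n. 1 + norm y^2/2 > 0" by (simp add: add_pos_nonneg)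
    have conth: "continuous_on UNIV (\<lambda>y. \<epsilon> * h y)"
      unfolding h_def using pos by (intro continuous_intros) (auto simp: less_imp_neq[symmetric] dest: less_imp_neq)
    have uw: "usc w" unfolding w_def by (rule usc_minus_cont[OF usc conth])
    let ?S = "cball (0::real^'n) R2 - ball 0 R1"
    have xS: "x \<in> ?S" using xR by (auto simp: R2_def)
    obtain x0 where x0: "x0 \<in> ?S" "\<forall>y\<in>?S. w y \<le> w x0"
      using usc_attains_max[OF uw compact_diff[OF compact_cball open_ball]] xS by blast
    have wx: "w x > u z0" using \<epsilon>x by (simp add: w_def)
    have wx0: "w x0 > u z0" using x0 xS wx by force
    have nx0: "norm x0 > R1"
    proof (rule ccontr)
      assume "\<not> norm x0 > R1"
      then have "u x0 \<le> u z0" using z0 by auto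
      moreover have "\<epsilon> * h x0 \<ge> 0" using \<epsilon> h0'[of x0] by simp
      ultimately show False using wx0 by (simp add: w_def)
    qed
    have all: "w y \<le> w x0" if "norm y \<ge> R1" for y
    proof (cases "norm y \<le> R2")
      case True then show ?thesis using x0 that by auto
    next
      case False then show ?thesis using far[of y] wx0 by auto
    qed
    define r where "r = norm x0 - R1"
    have r: "r > 0" using nx0 by (simp add: r_def)
    have loc: "\<forall>y\<in>ball x0 r. u y - g \<epsilon> (norm y^2) \<le> u x0 - g \<epsilon> (norm x0^2)"
    proof
      fix y assume "y \<in> ball x0 r"
      then have "norm y \<ge> R1" unfolding r_def using norm_triangle_ineq2[of x0 y]
        by (auto simp: dist_norm norm_minus_commute)
      then show "u y - g \<epsilon> (norm y^2) \<le> u x0 - g \<epsilon> (norm x0^2)"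
        using all[of y] by (simp add: w_def g_def h_def)
    qed
    define g1 where "g1 = (\<lambda>t::real. \<epsilon>/2 + \<epsilon>/(2+t))"
    define g2 where "g2 = (\<lambda>t::real. - (\<epsilon>/(2+t)^2))"
    have C2: "C2_with (\<lambda>y. g \<epsilon> (norm y^2)) (\<lambda>y. (2 * g1 (norm y^2)) *\<^sub>R y)
           (\<lambda>y. (2*g1 (norm y^2)) *\<^sub>R mat 1 + (4 * g2 (norm y^2)) *\<^sub>R outer y)"
    proof -
      have d1: "\<And>t. t \<ge> 0 \<Longrightarrow> (g \<epsilon> has_real_derivative g1 t) (at t)"
        unfolding g_def g1_def by (rule g_derivs)
      have d2: "\<And>t. t \<ge> 0 \<Longrightarrow> (g1 has_real_derivative g2 t) (at t)"
        unfolding g1_def g2_def by (rule g_derivs)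
      have cg: "continuous_on {0..} g2"
        unfolding g2_def by (intro continuous_intros) auto
      show ?thesis using radial_C2[of "g \<epsilon>" g1 g2 0, OF d1 d2 cg] by simp
    qed
    define t where "t = norm x0 ^ 2"
    have t: "t > 0" using nx0 R1 unfolding t_def by (intro zero_less_power) linarith
    obtain K3 where K3: "K3 > 0" "\<forall>\<xi> y \<alpha>. norm y \<le> norm x0 + 1 \<longrightarrow>
               \<xi> \<bullet> (diffmat \<sigma> y \<alpha> *v \<xi>) \<ge> norm \<xi> ^ 2 / K3"
      using C3[rule_format, of "norm x0 + 1"] by (auto simp: add_nonneg_pos)
    define \<eta> where "\<eta> = 4 * \<epsilon> * (t / K3) / (2+t)^2"
    have \<eta>: "\<eta> > 0" using \<epsilon> t K3 by (simp add: \<eta>_def add_pos_pos)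
    show False
    proof (rule touch_contra[OF sub C2 r loc \<eta>])
      fix \<alpha>
      have L: "Lop \<sigma> b x0 \<alpha> ((2 * g1 t) *\<^sub>R x0) ((2*g1 t) *\<^sub>R mat 1 + (4 * g2 t) *\<^sub>R outer x0)
          = (2*g1 t) * (norm (\<sigma> x0 \<alpha>) ^ 2 + b x0 \<alpha> \<bullet> x0) + (4 * g2 t) * (x0 \<bullet> (diffmat \<sigma> x0 \<alpha> *v x0))"
        unfolding Lop_radial by (simp add: algebra_simps)
      have c4: "norm (\<sigma> x0 \<alpha>)^2 + b x0 \<alpha> \<bullet> x0 \<le> c x0 \<alpha> * t / 2"
        using C4_alpha[OF bnd cpos Ro(2), of x0 \<alpha>] nx0 by (simp add: R1_def t_def)
      have g1p: "g1 t > 0" using \<epsilon> t by (simp add: g1_def add_pos_pos)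
      have q: "x0 \<bullet> (diffmat \<sigma> x0 \<alpha> *v x0) \<ge> t / K3" using K3(2) by (simp add: t_def)
      have A: "(2*g1 t) * (norm (\<sigma> x0 \<alpha>) ^ 2 + b x0 \<alpha> \<bullet> x0) \<le> g1 t * (c x0 \<alpha> * t)"
        using mult_left_mono[OF c4, of "2 * g1 t"] g1p by simp
      have B: "(4 * g2 t) * (x0 \<bullet> (diffmat \<sigma> x0 \<alpha> *v x0)) \<le> - \<eta>"
      proof -
        have "(4 * g2 t) * (x0 \<bullet> (diffmat \<sigma> x0 \<alpha> *v x0)) = - (4*\<epsilon>/(2+t)^2) * (x0 \<bullet> (diffmat \<sigma> x0 \<alpha> *v x0))"
          by (simp add: g2_def)
        also have "\<dots> \<le> - (4*\<epsilon>/(2+t)^2) * (t / K3)"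
          using q \<epsilon> t by (intro mult_left_mono_neg) auto
        finally show ?thesis by (simp add: \<eta>_def mult.commute)
      qed
      have Cc: "c x0 \<alpha> * (u x0 - g1 t * t) \<ge> 0"
        using sgn
      proof
        assume u0: "\<forall>x. u x \<ge> 0"
        have "g1 t * t = \<epsilon> * (t/2 + t/(2+t))" using t by (simp add: g1_def field_simps)
        also have "\<dots> \<le> \<epsilon> * (t/2 + ln (1 + t/2))" using ln_lower[of t] t \<epsilon> by (intro mult_left_mono) auto
        also have "\<dots> = \<epsilon> * h x0" by (simp add: h_def t_def)
        also have "\<dots> < u x0" using wx0 u0 by (simp add: w_def) (smt (verit))
        finally show ?thesis using cpos by simp
      next
        assume "\<forall>x \<alpha>. c x \<alpha> = 0" then show ?thesis by simp
      qed
      show "\<eta> \<le> - Lop \<sigma> b x0 \<alpha> ((2 * g1 (norm x0^2)) *\<^sub>R x0) ((2*g1 (norm x0^2)) *\<^sub>R mat 1 + (4 * g2 (norm x0^2)) *\<^sub>R outer x0) + c x0 \<alpha> * u x0"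
        using L A B Cc unfolding t_def[symmetric] by (simp add: algebra_simps)
    qed
  qed
  then show ?thesis by blast
qed




lemma exp_derivs:
  shows "((\<lambda>t. - \<delta> * exp (- lam * t)) has_real_derivative (\<delta> * lam * exp (- lam * t))) (at (t::real))"
    and "((\<lambda>t. \<delta> * lam * exp (- lam * t)) has_real_derivative (- (lam * (\<delta> * lam * exp (- lam * t))))) (at t)"
  by (auto intro!: derivative_eq_intros simp: algebra_simps)

lemma dist_eq_norm': "dist y x = norm (x - (y::real^'n))"
  by (simp add: dist_norm norm_minus_commute)

lemma step3:
  fixes \<sigma> :: "real^'n \<Rightarrow> 'a \<Rightarrow> real^'m^'n"
  assumes bnd: "\<forall>R>0. \<exists>K. (\<forall>x \<alpha>. norm x \<le> R \<longrightarrow> norm (\<sigma> x \<alpha>) + norm (b x \<alpha>) + \<bar>c x \<alpha>\<bar> \<le> K)"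
    and cpos: "\<forall>x \<alpha>. c x \<alpha> \<ge> 0"
    and C3: "\<forall>R>0. \<exists>K>0. \<forall>\<xi> x \<alpha>. norm x \<le> R \<longrightarrow>
               \<xi> \<bullet> (diffmat \<sigma> x \<alpha> *v \<xi>) \<ge> norm \<xi> ^ 2 / K"
    and sub: "visc_sub (Gop \<sigma> b c) u"
    and sgn: "(\<forall>x. u x \<ge> 0) \<or> (\<forall>x \<alpha>. c x \<alpha> = 0)"
    and zmax: "\<forall>x. u x \<le> u z"
  shows "\<forall>x. u x = u z"
proof (rule ccontr)
  assume "\<not> (\<forall>x. u x = u z)"
  then obtain y where yM: "u y < u z" using zmax by (metis order_less_le)
  define M where "M = u z"
  have usc: "usc u" using sub unfolding visc_sub_def by blast
  define S where "S = {x. M \<le> u x}"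
  have clS: "closed S"
  proof -
    have "- S = {x. u x < M}" by (auto simp: S_def)
    then show ?thesis using usc unfolding usc_def closed_def by simp
  qed
  have "z \<in> S" by (simp add: S_def M_def)
  then obtain x1 where x1: "x1 \<in> S" "\<forall>s\<in>S. dist y x1 \<le> dist y s"
  proof -
    have "S \<noteq> {}" using \<open>z \<in> S\<close> by blast
    then obtain x1 where "x1 \<in> S" "\<And>s. s \<in> S \<Longrightarrow> dist y x1 \<le> dist y s"
      using distance_attains_inf[OF clS, of y] by metis
    then show ?thesis using that by blast
  qed
  have ux1: "u x1 = M"
  proof -
    have "M \<le> u x1" using x1(1) by (simp add: S_def)
    moreover have "u x1 \<le> M" using zmax by (simp add: M_def)
    ultimately show ?thesis by linarith
  qed
  define \<rho> where "\<rho> = dist y x1"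
  have yS: "y \<notin> S" using yM by (simp add: S_def M_def)
  have \<rho>: "\<rho> > 0" using x1(1) yS by (auto simp: \<rho>_def)
  have inball: "u p < M" if "norm (p - y) < \<rho>" for p
  proof (rule ccontr)
    assume "\<not> u p < M"
    then have "p \<in> S" by (simp add: S_def)
    then have "\<rho> \<le> norm (p - y)" using x1(2) by (simp add: \<rho>_def dist_eq_norm')
    then show False using that by simp
  qed
  define T where "T = sphere y (\<rho>/2)"
  define p0 where "p0 = y + (\<rho>/2) *\<^sub>R axis (undefined::'n) (1::real)"
  have "p0 \<in> T" using \<rho> by (simp add: T_def p0_def dist_norm)
  then obtain p1 where p1: "p1 \<in> T" "\<forall>p\<in>T. u p \<le> u p1"
    using usc_attains_max[OF usc compact_sphere, of y "\<rho>/2"] unfolding T_def by blast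
  have up1: "u p1 < M" using p1(1) \<rho> by (intro inball) (simp add: T_def dist_eq_norm')
  define \<delta> where "\<delta> = (M - u p1) / 2"
  have \<delta>: "\<delta> > 0" using up1 by (simp add: \<delta>_def)
  define R where "R = norm y + \<rho>"
  have R: "R > 0" using \<rho> by (simp add: R_def add_nonneg_pos)
  obtain K where K: "\<And>x' \<alpha>. norm x' \<le> R \<Longrightarrow> norm (\<sigma> x' \<alpha>) \<le> K \<and> norm (b x' \<alpha>) \<le> K \<and> \<bar>c x' \<alpha>\<bar> \<le> K"
    using bound_K[OF bnd] by blast
  have K0: "K \<ge> 0"
  proof -
    have "norm y \<le> R" using \<rho> by (simp add: R_def)
    then have "norm (\<sigma> y undefined) \<le> K" using K by blast
    then show ?thesis using norm_ge_zero[of "\<sigma> y undefined"] by linarith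
  qed
  obtain K3 where K3: "K3 > 0" "\<forall>\<xi> x \<alpha>. norm x \<le> R \<longrightarrow> \<xi> \<bullet> (diffmat \<sigma> x \<alpha> *v \<xi>) \<ge> norm \<xi> ^ 2 / K3"
    using C3 R by blast
  define lam where "lam = 2 * K3 * (K^2 + K*\<rho> + 1) / \<rho>^2"
  have lam: "lam > 0" using K3 \<rho> K0 by (simp add: lam_def add_nonneg_pos)
  define g where "g = (\<lambda>t::real. - \<delta> * exp (- lam * t))"
  define g1 where "g1 = (\<lambda>t::real. \<delta> * lam * exp (- lam * t))"
  define g2 where "g2 = (\<lambda>t::real. - (lam * (\<delta> * lam * exp (- lam * t))))"
  have C2: "C2_with (\<lambda>x. g (norm (x-y)^2)) (\<lambda>x. (2 * g1 (norm(x-y)^2)) *\<^sub>R (x - y))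
           (\<lambda>x. (2*g1 (norm(x-y)^2)) *\<^sub>R mat 1 + (4 * g2 (norm(x-y)^2)) *\<^sub>R outer (x-y))"
  proof (rule radial_C2)
    show "\<And>t. t \<ge> 0 \<Longrightarrow> (g has_real_derivative g1 t) (at t)"
      unfolding g_def g1_def by (rule exp_derivs)
    show "\<And>t. t \<ge> 0 \<Longrightarrow> (g1 has_real_derivative g2 t) (at t)"
      unfolding g1_def g2_def by (rule exp_derivs)
    show "continuous_on {0..} g2" unfolding g2_def by (intro continuous_intros)
  qed
  define w where "w = (\<lambda>x. u x - g (norm (x-y)^2))"
  have contg: "continuous_on UNIV (\<lambda>x. g (norm (x-y)^2))"
    unfolding g_def by (intro continuous_intros)
  have uw: "usc w" unfolding w_def by (rule usc_minus_cont[OF usc contg])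
  have wform: "\<And>x. w x = u x + \<delta> * exp (- lam * norm (x-y)^2)" by (simp add: w_def g_def)
  let ?A = "cball y \<rho> - ball y (\<rho>/2)"
  have x1A: "x1 \<in> ?A" using \<rho> by (auto simp: \<rho>_def)
  obtain x0 where x0: "x0 \<in> ?A" "\<forall>p\<in>?A. w p \<le> w x0"
    using usc_attains_max[OF uw compact_diff[OF compact_cball open_ball]] x1A by blast
  have wx1: "w x1 = M + \<delta> * exp (- lam * \<rho>^2)"
    using ux1 by (simp add: wform \<rho>_def dist_eq_norm')
  have wx0: "w x0 \<ge> w x1" using x0 x1A by blast
  have onT: "w p < w x1" if "p \<in> T" for p
  proof -
    have "u p \<le> u p1" using p1 that by blast
    moreover have "exp (- lam * norm (p-y)^2) \<le> 1" using lam by simp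
    moreover have "\<delta> * exp (- lam * norm (p-y)^2) \<le> \<delta>" using calculation(2) \<delta> by (simp add: mult_left_le)
    moreover have "\<delta> * exp (- lam * \<rho>^2) > 0" using \<delta> by simp
    moreover have "w p = u p + \<delta> * exp (- lam * norm (p-y)^2)" by (rule wform)
    ultimately have "w p \<le> u p1 + \<delta>" by linarith
    moreover have "u p1 + \<delta> < M" using up1 by (simp add: \<delta>_def field_simps)
    moreover have "M < w x1" using wx1 \<delta> by simp
    ultimately show ?thesis by linarith
  qed
  have nx0: "norm (x0 - y) > \<rho>/2"
  proof -
    have "norm (x0 - y) \<ge> \<rho>/2" using x0(1) by (simp add: dist_eq_norm')
    moreover have "x0 \<notin> T" using onT wx0 by force
    ultimately show ?thesis by (simp add: T_def dist_eq_norm')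
  qed
  have nx0': "norm (x0 - y) \<le> \<rho>" using x0(1) by (simp add: dist_eq_norm')
  have all: "w p \<le> w x0" if "norm (p - y) \<ge> \<rho>/2" for p
  proof (cases "norm (p - y) \<le> \<rho>")
    case True then show ?thesis using x0 that by (simp add: dist_eq_norm')
  next
    case False
    have "u p \<le> M" using zmax by (simp add: M_def)
    moreover have "\<rho>^2 \<le> norm (p-y)^2" using False \<rho> by (intro power_mono) auto
    then have "exp (- lam * norm (p-y)^2) \<le> exp (- lam * \<rho>^2)" using lam by simp
    then have "\<delta> * exp (- lam * norm (p-y)^2) \<le> \<delta> * exp (- lam * \<rho>^2)" using \<delta> by (simp add: mult_left_mono)
    moreover have "w p = u p + \<delta> * exp (- lam * norm (p-y)^2)" by (rule wform)
    ultimately show ?thesis using wx0 wx1 by linarith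
  qed
  define r where "r = norm (x0 - y) - \<rho>/2"
  have r: "r > 0" using nx0 by (simp add: r_def)
  have loc: "\<forall>p\<in>ball x0 r. u p - g (norm (p-y)^2) \<le> u x0 - g (norm (x0-y)^2)"
  proof
    fix p assume "p \<in> ball x0 r"
    then have "norm (p - x0) < r" by (simp add: dist_eq_norm')
    moreover have "norm (x0 - y) \<le> norm (p - x0) + norm (p - y)"
      using norm_triangle_ineq[of "x0 - p" "p - y"] by (simp add: norm_minus_commute)
    ultimately have "norm (p - y) \<ge> \<rho>/2" by (simp add: r_def)
    then show "u p - g (norm (p-y)^2) \<le> u x0 - g (norm (x0-y)^2)"
      using all[of p] by (simp add: w_def)
  qed
  define s where "s = norm (x0 - y)^2"
  define v where "v = x0 - y"
  define E where "E = exp (- lam * s)"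
  have s1: "s \<ge> \<rho>^2/4"
  proof -
    have "(\<rho>/2)^2 \<le> norm (x0 - y)^2" using nx0 \<rho> by (intro power_mono) auto
    then show ?thesis by (simp add: s_def power_divide)
  qed
  have s2: "s \<le> \<rho>^2" using nx0' \<rho> unfolding s_def by (intro power_mono) auto
  have nv: "norm v \<le> \<rho>" using nx0' by (simp add: v_def)
  have normx0: "norm x0 \<le> R"
    using norm_triangle_ineq[of "x0 - y" y] nx0' by (simp add: R_def)
  define \<eta> where "\<eta> = 2 * (\<delta> * lam * exp (- lam * \<rho>^2))"
  have \<eta>: "\<eta> > 0" using \<delta> lam by (simp add: \<eta>_def)
  show False
  proof (rule touch_contra[OF sub C2 r loc \<eta>])
    fix \<alpha>
    have g1s: "g1 s = \<delta> * lam * E" by (simp add: g1_def E_def)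
    have g1p: "g1 s > 0" using \<delta> lam by (simp add: g1s E_def)
    have g2s: "g2 s = - lam * g1 s" by (simp add: g1_def g2_def)
    have L: "Lop \<sigma> b x0 \<alpha> ((2 * g1 s) *\<^sub>R v) ((2*g1 s) *\<^sub>R mat 1 + (4 * g2 s) *\<^sub>R outer v)
          = (2*g1 s) * (norm (\<sigma> x0 \<alpha>) ^ 2 + b x0 \<alpha> \<bullet> v) + (4 * g2 s) * (v \<bullet> (diffmat \<sigma> x0 \<alpha> *v v))"
      unfolding Lop_radial by (simp add: algebra_simps)
    have k: "norm (\<sigma> x0 \<alpha>) \<le> K" "norm (b x0 \<alpha>) \<le> K" using K[OF normx0] by auto
    have P1: "norm (\<sigma> x0 \<alpha>) ^ 2 + b x0 \<alpha> \<bullet> v \<le> K^2 + K * \<rho>"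
    proof -
      have "norm (\<sigma> x0 \<alpha>) ^ 2 \<le> K^2" using k(1) by (simp add: power_mono)
      moreover have "b x0 \<alpha> \<bullet> v \<le> norm (b x0 \<alpha>) * norm v" by (rule norm_cauchy_schwarz)
      moreover have "norm (b x0 \<alpha>) * norm v \<le> K * \<rho>" using k(2) nv K0 by (intro mult_mono) auto
      ultimately show ?thesis by linarith
    qed
    have P2: "(2*g1 s) * (norm (\<sigma> x0 \<alpha>) ^ 2 + b x0 \<alpha> \<bullet> v) \<le> (2*g1 s) * (K^2 + K * \<rho>)"
      using P1 g1p by (intro mult_left_mono) auto
    have q: "v \<bullet> (diffmat \<sigma> x0 \<alpha> *v v) \<ge> \<rho>^2/4 / K3"
    proof -
      have "v \<bullet> (diffmat \<sigma> x0 \<alpha> *v v) \<ge> s / K3" using K3(2) normx0 by (simp add: s_def v_def)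
      moreover have "s / K3 \<ge> \<rho>^2/4 / K3" using divide_right_mono[OF s1 less_imp_le[OF K3(1)]] by simp
      ultimately show ?thesis by linarith
    qed
    have P3: "(4 * g2 s) * (v \<bullet> (diffmat \<sigma> x0 \<alpha> *v v)) \<le> (4 * g2 s) * (\<rho>^2/4 / K3)"
      using q g1p lam by (intro mult_left_mono_neg) (auto simp: g2s)
    have P4: "(2*g1 s) * (K^2 + K * \<rho>) + (4 * g2 s) * (\<rho>^2/4 / K3) = - 2 * g1 s"
    proof -
      have lr: "lam * \<rho>^2 = 2 * K3 * (K^2 + K*\<rho> + 1)" using \<rho> by (simp add: lam_def)
      have "(4 * g2 s) * (\<rho>^2/4 / K3) = - g1 s * (lam * \<rho>^2) / K3" by (simp add: g2s)
      also have "\<dots> = - g1 s * (2 * (K^2 + K*\<rho> + 1))" unfolding lr using K3(1) by simp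
      finally show ?thesis by (simp add: algebra_simps)
    qed
    have P5: "g1 s \<ge> \<delta> * lam * exp (- lam * \<rho>^2)"
      using s2 \<delta> lam by (simp add: g1s E_def mult_left_mono)
    have Cc: "c x0 \<alpha> * u x0 \<ge> 0"
      using sgn
    proof
      assume "\<forall>x. u x \<ge> 0" then show ?thesis using cpos by simp
    next
      assume "\<forall>x \<alpha>. c x \<alpha> = 0" then show ?thesis by simp
    qed
    show "\<eta> \<le> - Lop \<sigma> b x0 \<alpha> ((2 * g1 (norm (x0-y)^2)) *\<^sub>R (x0 - y))
           ((2*g1 (norm (x0-y)^2)) *\<^sub>R mat 1 + (4 * g2 (norm (x0-y)^2)) *\<^sub>R outer (x0-y)) + c x0 \<alpha> * u x0"
    proof -
      have sv: "norm v ^ 2 = s" by (simp add: s_def v_def)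
      show ?thesis using L P2 P3 P4 P5 Cc unfolding v_def[symmetric] sv \<eta>_def by linarith
    qed
  qed
qed




theorem corollary2p4:
  fixes \<sigma> :: "real^'n \<Rightarrow> 'a::metric_space \<Rightarrow> real^'m^'n"
    and b :: "real^'n \<Rightarrow> 'a \<Rightarrow> real^'n"
    and c :: "real^'n \<Rightarrow> 'a \<Rightarrow> real"
  assumes cont_sigma: "continuous_on UNIV (\<lambda>p. \<sigma> (fst p) (snd p))"
    and cont_b: "continuous_on UNIV (\<lambda>p. b (fst p) (snd p))"
    and cont_c: "continuous_on UNIV (\<lambda>p. c (fst p) (snd p))"
    and C1: "\<forall>R>0. \<exists>K. (\<forall>x \<alpha>. norm x \<le> R \<longrightarrow> norm (\<sigma> x \<alpha>) + norm (b x \<alpha>) + \<bar>c x \<alpha>\<bar> \<le> K)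
              \<and> (\<forall>x y \<alpha>. norm x \<le> R \<longrightarrow> norm y \<le> R \<longrightarrow>
                   norm (\<sigma> x \<alpha> - \<sigma> y \<alpha>) + norm (b x \<alpha> - b y \<alpha>) \<le> K * norm (x - y))"
    and C2_nonneg: "\<forall>x \<alpha>. c x \<alpha> \<ge> 0"
    and C2_unif: "\<forall>R>0. \<forall>\<epsilon>>0. \<exists>\<delta>>0. \<forall>x y \<alpha>. norm x \<le> R \<longrightarrow> norm y \<le> R \<longrightarrow>
                    norm (x - y) < \<delta> \<longrightarrow> \<bar>c x \<alpha> - c y \<alpha>\<bar> < \<epsilon>"
    and C3: "\<forall>R>0. \<exists>K>0. \<forall>\<xi> x \<alpha>. norm x \<le> R \<longrightarrow>
               \<xi> \<bullet> (diffmat \<sigma> x \<alpha> *v \<xi>) \<ge> norm \<xi> ^ 2 / K"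
    and C4: "\<exists>Ro\<ge>0. \<forall>x. norm x \<ge> Ro \<longrightarrow>
               (SUP \<alpha>. trace (diffmat \<sigma> x \<alpha>) + b x \<alpha> \<bullet> x - c x \<alpha> * norm x ^ 2 / 2) \<le> 0"
  shows "(\<forall>u. visc_sub (Gop \<sigma> b c) u
              \<and> Limsup at_infinity (\<lambda>x. ereal (u x / norm x ^ 2)) \<le> 0
              \<and> ((\<forall>x. u x \<ge> 0) \<or> (\<forall>x \<alpha>. c x \<alpha> = 0))
           \<longrightarrow> (\<exists>k. \<forall>x. u x = k))
       \<and> (\<forall>v. visc_super (Gtop \<sigma> b c) v
              \<and> Liminf at_infinity (\<lambda>x. ereal (v x / norm x ^ 2)) \<ge> 0
              \<and> ((\<forall>x. v x \<le> 0) \<or> (\<forall>x \<alpha>. c x \<alpha> = 0))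
           \<longrightarrow> (\<exists>k. \<forall>x. v x = k))"
proof -
  have bnd: "\<forall>R>0. \<exists>K. (\<forall>x \<alpha>. norm x \<le> R \<longrightarrow> norm (\<sigma> x \<alpha>) + norm (b x \<alpha>) + \<bar>c x \<alpha>\<bar> \<le> K)"
    using C1 by blast
  have partA: "\<exists>k. \<forall>x. u x = k"
    if H: "visc_sub (Gop \<sigma> b c) u" "Limsup at_infinity (\<lambda>x. ereal (u x / norm x ^ 2)) \<le> 0"
          "(\<forall>x. u x \<ge> 0) \<or> (\<forall>x \<alpha>. c x \<alpha> = 0)" for u
  proof -
    obtain z where "\<forall>x. u x \<le> u z" using step1[OF bnd C2_nonneg C3 C4 H] by blast
    then have "\<forall>x. u x = u z" using step3[OF bnd C2_nonneg C3 H(1) H(3)] by blast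
    then show ?thesis by blast
  qed
  show ?thesis
  proof (intro conjI allI impI)
    fix u assume "visc_sub (Gop \<sigma> b c) u
              \<and> Limsup at_infinity (\<lambda>x. ereal (u x / norm x ^ 2)) \<le> 0
              \<and> ((\<forall>x. u x \<ge> 0) \<or> (\<forall>x \<alpha>. c x \<alpha> = 0))"
    then show "\<exists>k. \<forall>x. u x = k" using partA by blast
  next
    fix v assume H: "visc_super (Gtop \<sigma> b c) v
              \<and> Liminf at_infinity (\<lambda>x. ereal (v x / norm x ^ 2)) \<ge> 0
              \<and> ((\<forall>x. v x \<le> 0) \<or> (\<forall>x \<alpha>. c x \<alpha> = 0))"
    define u where "u = (\<lambda>x. - v x)"
    have sup: "visc_super (Gtop \<sigma> b c) v" using H by blast
    have "usc u"
    proof -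
      have "lsc v" using sup unfolding visc_super_def by blast
      moreover have "\<And>t. {x. u x < t} = {x. v x > - t}" by (auto simp: u_def)
      ultimately show ?thesis unfolding usc_def lsc_def by simp
    qed
    moreover have "Gop \<sigma> b c x0 (u x0) (D\<phi> x0) (D2\<phi> x0) \<le> 0"
      if C2: "C2_with \<phi> D\<phi> D2\<phi>" and loc: "\<exists>r>0. \<forall>y\<in>ball x0 r. u y - \<phi> y \<le> u x0 - \<phi> x0"
      for \<phi> D\<phi> D2\<phi> x0
    proof -
      have C2': "C2_with (\<lambda>x. - \<phi> x) (\<lambda>x. - D\<phi> x) (\<lambda>x. - D2\<phi> x)" by (rule C2_neg[OF C2])
      have loc': "\<exists>r>0. \<forall>y\<in>ball x0 r. v y - (- \<phi> y) \<ge> v x0 - (- \<phi> x0)"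
      proof -
        obtain r where r: "r > 0" "\<forall>y\<in>ball x0 r. u y - \<phi> y \<le> u x0 - \<phi> x0" using loc by blast
        have "\<forall>y\<in>ball x0 r. v y - (- \<phi> y) \<ge> v x0 - (- \<phi> x0)"
        proof
          fix y assume "y \<in> ball x0 r"
          then have "u y - \<phi> y \<le> u x0 - \<phi> x0" using r by blast
          then show "v y - (- \<phi> y) \<ge> v x0 - (- \<phi> x0)" by (simp add: u_def)
        qed
        then show ?thesis using r(1) by blast
      qed
      have "Gtop \<sigma> b c x0 (v x0) (- D\<phi> x0) (- D2\<phi> x0) \<ge> 0"
        using sup C2' loc' unfolding visc_super_def by blast
      moreover have "Gop \<sigma> b c x0 (u x0) (D\<phi> x0) (D2\<phi> x0) = - Gtop \<sigma> b c x0 (v x0) (- D\<phi> x0) (- D2\<phi> x0)"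
        by (simp add: Gop_Gtop u_def)
      ultimately show ?thesis by simp
    qed
    ultimately have sub: "visc_sub (Gop \<sigma> b c) u" unfolding visc_sub_def by blast
    have "Limsup at_infinity (\<lambda>x. ereal (u x / norm x ^ 2))
        = Limsup at_infinity (\<lambda>x. - ereal (v x / norm x ^ 2))"
      by (simp add: u_def)
    also have "\<dots> = - Liminf at_infinity (\<lambda>x. ereal (v x / norm x ^ 2))"
      by (rule ereal_Limsup_uminus)
    also have "\<dots> \<le> 0" using H by simp
    finally have lim: "Limsup at_infinity (\<lambda>x. ereal (u x / norm x ^ 2)) \<le> 0" .
    have sgn: "(\<forall>x. u x \<ge> 0) \<or> (\<forall>x \<alpha>. c x \<alpha> = 0)" using H by (auto simp: u_def)
    obtain k where "\<forall>x. u x = k" using partA[OF sub lim sgn] by blast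
    then have "\<forall>x. v x = - k" by (auto simp: u_def)
    then show "\<exists>k. \<forall>x. v x = k" by blast
  qed
qed


end
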